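(* Let $A_1,\dots,A_n$ be events in a probability space and let $j,k\in\{1,\dots,n\}$, with $n>2-\delta_{jk}$, where $\delta_{jk}$ is the Kronecker delta. Then \[ \Pr\Big(\bigcup_{i=1}^n A_i\Big) \ge \frac{1}{n-2+\delta_{jk}}\Big(\sum_{i=1}^n\Pr(A_i) - \sum_{\substack{i=1\\ i\ne j}}^n\Pr(A_i\cap A_j) - \sum_{\substack{i=1\\ i\ne j,k}}^n\Pr(A_i\cap A_k) + \sum_{\substack{i=1\\ i\ne j,k}}^n\Pr(A_i\cap A_j\cap A_k)\Big). \] *)

theory Defs
  imports "HOL-Probability.Probability"
begin

end

theory Submission
  imports Defs
begin

lemma helper:
  fixes a :: "nat \<Rightarrow> real" and I :: "nat set"
  assumes fin: "finite I" and jI: "j \<in> I" and kI: "k \<in> I"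
    and a01: "\<And>i. a i = 0 \<or> a i = 1"
    and card: "real (card I) > 2 - (if j = k then 1 else 0)"
  shows "(\<Sum>i\<in>I. a i) - (\<Sum>i\<in>I - {j}. a i * a j) - (\<Sum>i\<in>I - {j, k}. a i * a k)
     + (\<Sum>i\<in>I - {j, k}. a i * a j * a k)
     \<le> (real (card I) - 2 + (if j = k then 1 else 0)) * (if \<exists>i\<in>I. a i = 1 then 1 else 0)"
proof -
  define S where "S = (\<Sum>i\<in>I - {j, k}. a i)"
  have Sle: "S \<le> real (card (I - {j,k}))"
    unfolding S_def using sum_bounded_above[of "I - {j,k}" a 1] a01
    by (metis mult.right_neutral order_refl zero_le_one)
  have S0: "S \<ge> 0" unfolding S_def using a01 by (intro sum_nonneg) (metis order_refl zero_le_one)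
  have Spos: "S > 0 \<Longrightarrow> \<exists>i\<in>I. a i = 1"
  proof (rule ccontr)
    assume "S > 0" "\<not> (\<exists>i\<in>I. a i = 1)"
    then have "\<forall>i\<in>I - {j,k}. a i = 0" using a01 by auto
    then have "S = 0" unfolding S_def by simp
    with \<open>S > 0\<close> show False by simp
  qed
  have aj: "a j = 1 \<Longrightarrow> \<exists>i\<in>I. a i = 1" "a k = 1 \<Longrightarrow> \<exists>i\<in>I. a i = 1" using jI kI by auto
  show ?thesis
  proof (cases "j = k")
    case True
    have c: "card (I - {j,k}) = card I - 1" using True jI fin by simp
    have ci: "card I \<ge> 1" using jI fin by (metis One_nat_def Suc_leI card_gt_0_iff empty_iff)
    have e1: "(\<Sum>i\<in>I. a i) = a j + S" unfolding S_def using True fin jI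
      by (simp add: sum.remove)
    have e2: "(\<Sum>i\<in>I - {j}. a i * a j) = S * a j" unfolding S_def using True
      by (simp add: sum_distrib_right)
    have e3: "(\<Sum>i\<in>I - {j, k}. a i * a j * a k) = S * a j"
      using a01[of k] True unfolding S_def by (auto simp: sum_distrib_right)
    have "real (card I) \<ge> 2" using card True by simp
    moreover have "S \<le> real (card I) - 1" using Sle c ci by (simp add: of_nat_diff)
    ultimately show ?thesis using e1 e2 e3 True a01[of j] Spos aj S0
      by (cases "S > 0") (auto simp: algebra_simps)
  next
    case False
    have c: "card (I - {j,k}) = card I - 2" using False jI kI fin
      by (simp add: card_Diff_subset)
    have ci: "card I \<ge> 2" using card False by simp
    have sub: "I - {j} = insert k (I - {j,k})" using kI False by auto
    have e1: "(\<Sum>i\<in>I. a i) = a j + a k + S" unfolding S_def using False fin jI kI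
      by (simp add: sum.remove sub insert_Diff_if)
    have e2: "(\<Sum>i\<in>I - {j}. a i * a j) = a k * a j + S * a j" unfolding S_def using fin
      by (simp add: sub sum_distrib_right)
    have e3: "(\<Sum>i\<in>I - {j, k}. a i * a k) = S * a k" unfolding S_def
      by (simp add: sum_distrib_right)
    have e4: "(\<Sum>i\<in>I - {j, k}. a i * a j * a k) = S * a j * a k" unfolding S_def
      by (simp add: sum_distrib_right)
    have "real (card I) \<ge> 3" using card False by simp
    moreover have "S \<le> real (card I) - 2" using Sle c ci by (simp add: of_nat_diff)
    ultimately show ?thesis using e1 e2 e3 e4 False a01[of j] a01[of k] Spos aj S0
      by (cases "S > 0"; auto simp: algebra_simps)
  qed
qed

theorem corollary3:
  fixes M :: "'a measure" and A :: "nat \<Rightarrow> 'a set" and n j k :: nat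
  assumes "prob_space M"
    and "\<And>i. i \<in> {1..n} \<Longrightarrow> A i \<in> sets M"
    and "j \<in> {1..n}" and "k \<in> {1..n}"
    and "real n > 2 - (if j = k then 1 else 0)"
  shows "measure M (\<Union>i\<in>{1..n}. A i) \<ge>
    (1 / (real n - 2 + (if j = k then 1 else 0))) *
      ((\<Sum>i\<in>{1..n}. measure M (A i))
       - (\<Sum>i\<in>{1..n} - {j}. measure M (A i \<inter> A j))
       - (\<Sum>i\<in>{1..n} - {j, k}. measure M (A i \<inter> A k))
       + (\<Sum>i\<in>{1..n} - {j, k}. measure M (A i \<inter> A j \<inter> A k)))"
proof -
  interpret P: prob_space M by fact
  note meas = assms(2)
  define I where "I = {1..n}"
  define m where "m = real n - 2 + (if j = k then 1 else 0)"
  have mpos: "m > 0" using assms(5) unfolding m_def by simp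
  have cI: "card I = n" unfolding I_def by simp
  have ms: "B \<in> sets M \<Longrightarrow> measure M B = integral\<^sup>L M (indicator B)" for B
    by (simp add: P.emeasure_finite)
  have intg: "B \<in> sets M \<Longrightarrow> integrable M (indicator B :: 'a \<Rightarrow> real)" for B
    by (rule integrable_real_indicator) (auto simp: less_top[symmetric])
  have mI: "i \<in> I \<Longrightarrow> A i \<in> sets M" for i using meas I_def by auto
  define f where "f x = (\<Sum>i\<in>I. indicator (A i) x)
       - (\<Sum>i\<in>I - {j}. indicator (A i \<inter> A j) x)
       - (\<Sum>i\<in>I - {j, k}. indicator (A i \<inter> A k) x)
       + (\<Sum>i\<in>I - {j, k}. indicator (A i \<inter> A j \<inter> A k) x :: real)" for x
  have jI: "j \<in> I" "k \<in> I" using assms(3,4) I_def by auto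
  have inter: "i \<in> I \<Longrightarrow> A i \<inter> A j \<in> sets M" "i \<in> I \<Longrightarrow> A i \<inter> A k \<in> sets M"
    "i \<in> I \<Longrightarrow> A i \<inter> A j \<inter> A k \<in> sets M" for i using mI jI by auto
  have U: "(\<Union>i\<in>I. A i) \<in> sets M" using mI by auto
  have intf: "integral\<^sup>L M f = (\<Sum>i\<in>I. measure M (A i))
       - (\<Sum>i\<in>I - {j}. measure M (A i \<inter> A j))
       - (\<Sum>i\<in>I - {j, k}. measure M (A i \<inter> A k))
       + (\<Sum>i\<in>I - {j, k}. measure M (A i \<inter> A j \<inter> A k))"
  proof -
    have i1: "integrable M (\<lambda>x. \<Sum>i\<in>I. indicator (A i) x :: real)"
      using intg mI by (intro Bochner_Integration.integrable_sum) auto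
    have i2: "integrable M (\<lambda>x. \<Sum>i\<in>I - {j}. indicator (A i \<inter> A j) x :: real)"
      using intg inter by (intro Bochner_Integration.integrable_sum) auto
    have i3: "integrable M (\<lambda>x. \<Sum>i\<in>I - {j, k}. indicator (A i \<inter> A k) x :: real)"
      using intg inter by (intro Bochner_Integration.integrable_sum) auto
    have i4: "integrable M (\<lambda>x. \<Sum>i\<in>I - {j, k}. indicator (A i \<inter> A j \<inter> A k) x :: real)"
      using intg inter by (intro Bochner_Integration.integrable_sum) auto
    have "integral\<^sup>L M f = integral\<^sup>L M (\<lambda>x. \<Sum>i\<in>I. indicator (A i) x :: real)
       - integral\<^sup>L M (\<lambda>x. \<Sum>i\<in>I - {j}. indicator (A i \<inter> A j) x :: real)
       - integral\<^sup>L M (\<lambda>x. \<Sum>i\<in>I - {j, k}. indicator (A i \<inter> A k) x :: real)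
       + integral\<^sup>L M (\<lambda>x. \<Sum>i\<in>I - {j, k}. indicator (A i \<inter> A j \<inter> A k) x :: real)"
      unfolding f_def using i1 i2 i3 i4 by simp
    also have "\<dots> = (\<Sum>i\<in>I. measure M (A i))
       - (\<Sum>i\<in>I - {j}. measure M (A i \<inter> A j))
       - (\<Sum>i\<in>I - {j, k}. measure M (A i \<inter> A k))
       + (\<Sum>i\<in>I - {j, k}. measure M (A i \<inter> A j \<inter> A k))"
      using intg mI inter ms by (simp add: Bochner_Integration.integral_sum)
    finally show ?thesis .
  qed
  have pt: "f x \<le> m * indicator (\<Union>i\<in>I. A i) x" for x
  proof -
    have "f x \<le> (real (card I) - 2 + (if j = k then 1 else 0)) *
        (if \<exists>i\<in>I. indicator (A i) x = (1::real) then 1 else 0)"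
      unfolding f_def indicator_inter_arith
      apply (rule helper[where a="\<lambda>i. indicator (A i) x"])
      using jI assms(5) cI unfolding I_def by (auto simp: indicator_def)
    also have "\<dots> = m * indicator (\<Union>i\<in>I. A i) x"
      unfolding m_def cI by (auto simp: indicator_def)
    finally show ?thesis .
  qed
  have "integral\<^sup>L M f \<le> integral\<^sup>L M (\<lambda>x. m * indicator (\<Union>i\<in>I. A i) x)"
    apply (rule integral_mono)
    unfolding f_def
      apply (intro Bochner_Integration.integrable_add Bochner_Integration.integrable_diff integrable_sum; use intg mI inter in auto)
    using intg[OF U] pt[unfolded f_def] by auto
  also have "\<dots> = m * measure M (\<Union>i\<in>I. A i)" using ms[OF U] by simp
  finally have "integral\<^sup>L M f / m \<le> measure M (\<Union>i\<in>I. A i)"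
    using mpos by (simp add: divide_le_eq mult.commute)
  then show ?thesis unfolding intf m_def[symmetric] I_def[symmetric] by simp
qed

end
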